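(* For each $t\in\{0,1,\dots,T\}$ and $i\in\{1,\dots,N\}$, the function $(x,k)\mapsto\tilde V^{N,i}_t(x,k)$ on $\mathbb{N}_0^2$ is (i) non-decreasing in $x$ for each fixed $k$, and (ii) non-decreasing in $k$ for each fixed $x$.
   Context: Fix integers $N\ge1$, $T\ge1$, reals $\alpha_0,\beta_0>0$, and for each $i\in\{1,\dots,N\}$ an integer failure threshold $\xi_i\ge1$ and costs $0<c_p^i<c_u^i$. $\mathbb{N}_0=\{0,1,2,\dots\}$. For real $r>0$ and $p\in(0,1)$, $NB(r,p)$ is the distribution on $\mathbb{N}_0$ with $P(n)=\frac{\Gamma(n+r)}{\Gamma(r)n!}p^r(1-p)^n$; $NB(0,p)$ is the point mass at $0$. For $t\in\{0,\dots,T\}$ let $p_t=\frac{\beta_0+Nt}{\beta_0+Nt+1}$. Let $\mathbb{I}_i(x)=1$ if $x\ge\xi_i$, else $0$; $\mathcal{A}_i(x)=\{0,1\}$ if $x<\xi_i$ and $\{1\}$ if $x\ge\xi_i$ ($a=1$: replacement); $C_i(x,a)=a(1-\mathbb{I}_i(x))c_p^i+\mathbb{I}_i(x)c_u^i$. Define $\tilde V^{N,i}_T(x,k)=\mathbb{I}_i(x)c_u^i$ and for $t=T-1,\dots,0$: $\tilde V^{N,i}_t(x,k)=\min_{a\in\mathcal{A}_i(x)}\{C_i(x,a)+\mathbb{E}[\tilde V^{N,i}_{t+1}(x(1-a)+Z,\;k+Z+K)]\}$, where $Z\sim NB(\alpha_0+k,p_t)$ and $K\sim NB((N-1)(\alpha_0+k),p_t)$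 are independent. *)

theory Defs
  imports "HOL-Analysis.Analysis"
begin

definition nb_pmf :: "real \<Rightarrow> real \<Rightarrow> nat \<Rightarrow> real" where
  "nb_pmf r p n = (if r = 0 then (if n = 0 then 1 else 0)
     else Gamma (real n + r) / (Gamma r * fact n) * p powr r * (1 - p) ^ n)"

definition p_t :: "nat \<Rightarrow> real \<Rightarrow> nat \<Rightarrow> real" where
  "p_t N \<beta>0 t = (\<beta>0 + real N * real t) / (\<beta>0 + real N * real t + 1)"

definition ind :: "nat \<Rightarrow> nat \<Rightarrow> real" where
  "ind \<xi> x = (if x \<ge> \<xi> then 1 else 0)"

definition acts :: "nat \<Rightarrow> nat \<Rightarrow> nat set" where
  "acts \<xi> x = (if x < \<xi> then {0, 1} else {1})"

definition cost :: "nat \<Rightarrow> real \<Rightarrow> real \<Rightarrow> nat \<Rightarrow> nat \<Rightarrow> real" where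
  "cost \<xi> cp cu x a = real a * (1 - ind \<xi> x) * cp + ind \<xi> x * cu"

text \<open>Value function indexed by the number m of remaining steps; stage t = T - m.\<close>
fun Vrem :: "nat \<Rightarrow> nat \<Rightarrow> real \<Rightarrow> real \<Rightarrow> nat \<Rightarrow> real \<Rightarrow> real \<Rightarrow> nat \<Rightarrow> nat \<Rightarrow> nat \<Rightarrow> real" where
  "Vrem N T \<alpha>0 \<beta>0 \<xi> cp cu 0 x k = ind \<xi> x * cu"
| "Vrem N T \<alpha>0 \<beta>0 \<xi> cp cu (Suc m) x k =
     (let t = T - Suc m; p = p_t N \<beta>0 t; r = \<alpha>0 + real k in
      Min ((\<lambda>a. cost \<xi> cp cu x a +
              (\<Sum>\<^sub>\<infinity>(z, j)\<in>UNIV. nb_pmf r p z * nb_pmf ((real N - 1) * r) p j *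
                  Vrem N T \<alpha>0 \<beta>0 \<xi> cp cu m (x * (1 - a) + z) (k + z + j))) ` acts \<xi> x))"

definition Vtil :: "nat \<Rightarrow> nat \<Rightarrow> real \<Rightarrow> real \<Rightarrow> nat \<Rightarrow> real \<Rightarrow> real \<Rightarrow> nat \<Rightarrow> nat \<Rightarrow> nat \<Rightarrow> real" where
  "Vtil N T \<alpha>0 \<beta>0 \<xi> cp cu t x k = Vrem N T \<alpha>0 \<beta>0 \<xi> cp cu (T - t) x k"

end

theory Submission
  imports Defs
begin


lemma nonpos_pos: "(r::real) > 0 \<Longrightarrow> r \<notin> \<int>\<^sub>\<le>\<^sub>0"
  by (auto simp: nonpos_Ints_def)

lemma nb_nonneg: "r \<ge> 0 \<Longrightarrow> 0 < p \<Longrightarrow> p < 1 \<Longrightarrow> 0 \<le> nb_pmf r p n"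
  unfolding nb_pmf_def by (auto intro!: mult_nonneg_nonneg divide_nonneg_nonneg less_imp_le[OF Gamma_real_pos])

lemma nb_rec: assumes "r \<ge> 0"
  shows "nb_pmf r p (Suc n) = nb_pmf r p n * ((real n + r)/(real n + 1)) * (1-p)"
proof (cases "r = 0")
  case True then show ?thesis by (simp add: nb_pmf_def)
next
  case False
  then have r: "r > 0" using assms by simp
  have "Gamma (real (Suc n) + r) = (real n + r) * Gamma (real n + r)"
    using Gamma_plus1[OF nonpos_pos[of "real n + r"]] r by (simp add: add_ac)
  then show ?thesis using False r
    by (simp add: nb_pmf_def field_simps)
qed

lemma nb_poch: assumes "r > 0"
  shows "nb_pmf r p n = ((-r) gchoose n) * (p - 1)^n * p powr r"
proof -
  have "pochhammer r n = Gamma (r + real n) / Gamma r"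
    using pochhammer_Gamma[OF nonpos_pos[OF assms]] by simp
  moreover have "((-r) gchoose n) = (-1)^n * pochhammer r n / fact n"
    by (simp add: gbinomial_pochhammer)
  moreover have "(p - 1)^n = (-1)^n * (1-p)^n"
    by (metis minus_diff_eq mult_minus1 power_mult_distrib)
  moreover have "((-1::real)^n) * (-1)^n = 1"
    by (metis power_mult_distrib mult_minus1 minus_minus power_one)
  ultimately show ?thesis using assms
    by (simp add: nb_pmf_def field_simps add.commute)
qed

lemma nb_sums: assumes "r \<ge> 0" "0 < p" "p < 1"
  shows "nb_pmf r p sums 1"
proof (cases "r = 0")
  case True
  have "nb_pmf r p = (\<lambda>n. if n = 0 then (\<lambda>_. 1::real) n else 0)"
    using True by (auto simp: nb_pmf_def)
  then show ?thesis using sums_single[of 0 "\<lambda>_. 1::real"] by simp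
next
  case False
  then have r: "r > 0" using assms by simp
  have "\<bar>p - 1\<bar> < 1" using assms by simp
  from gen_binomial_real[OF this, of "-r"]
  have "(\<lambda>n. ((-r) gchoose n) * (p - 1)^n) sums (p powr (-r))" by simp
  then have "(\<lambda>n. ((-r) gchoose n) * (p - 1)^n * p powr r) sums (p powr (-r) * p powr r)"
    by (rule sums_mult2)
  moreover have "p powr (-r) * p powr r = 1" using assms
    by (simp add: powr_minus field_simps)
  moreover have "nb_pmf r p = (\<lambda>n. ((-r) gchoose n) * (p - 1)^n * p powr r)"
    by (rule ext) (rule nb_poch[OF r])
  ultimately show ?thesis by simp
qed

lemma nb_has_sum: "r \<ge> 0 \<Longrightarrow> 0 < p \<Longrightarrow> p < 1 \<Longrightarrow> (nb_pmf r p has_sum 1) UNIV"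
  by (rule sums_nonneg_imp_has_sum[OF nb_sums nb_nonneg])

definition E1 :: "real \<Rightarrow> real \<Rightarrow> (nat \<Rightarrow> real) \<Rightarrow> real" where
  "E1 r p f = (\<Sum>\<^sub>\<infinity>n\<in>UNIV. nb_pmf r p n * f n)"

context
  fixes p :: real
  assumes p0: "0 < p" and p1: "p < 1"
begin

lemma E1_has_sum_const: "r \<ge> 0 \<Longrightarrow> ((\<lambda>n. nb_pmf r p n * c) has_sum c) UNIV"
  using has_sum_cmult_left[OF nb_has_sum[OF _ p0 p1], of r c] by simp

lemma E1_summable:
  assumes r: "r \<ge> 0" and f: "\<And>n. 0 \<le> f n" "\<And>n. f n \<le> B"
  shows "(\<lambda>n. nb_pmf r p n * f n) summable_on UNIV"
proof (rule summable_on_comparison_test)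
  show "(\<lambda>n. nb_pmf r p n * B) summable_on UNIV"
    using E1_has_sum_const[OF r] by (auto simp: summable_on_def)
  show "nb_pmf r p n * f n \<le> nb_pmf r p n * B" for n
    by (rule mult_left_mono[OF f(2) nb_nonneg[OF r p0 p1]])
  show "0 \<le> nb_pmf r p n * f n" for n
    using f(1) nb_nonneg[OF r p0 p1] by simp
qed

lemma E1_has_sum:
  assumes r: "r \<ge> 0" and f: "\<And>n. 0 \<le> f n" "\<And>n. f n \<le> B"
  shows "((\<lambda>n. nb_pmf r p n * f n) has_sum E1 r p f) UNIV"
  unfolding E1_def using E1_summable[OF assms] by simp

lemma E1_nonneg:
  assumes r: "r \<ge> 0" and f: "\<And>n. 0 \<le> f n"
  shows "0 \<le> E1 r p f"
  unfolding E1_def using f nb_nonneg[OF r p0 p1] by (intro infsum_nonneg) simp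

lemma E1_le:
  assumes r: "r \<ge> 0" and f: "\<And>n. 0 \<le> f n" "\<And>n. f n \<le> B"
  shows "E1 r p f \<le> B"
  by (rule has_sum_mono[OF E1_has_sum[OF assms] E1_has_sum_const[OF r, of B]])
    (rule mult_left_mono[OF f(2) nb_nonneg[OF r p0 p1]])

lemma E1_mono:
  assumes r: "r \<ge> 0" and f: "\<And>n. 0 \<le> f n" "\<And>n. f n \<le> B"
    and g: "\<And>n. 0 \<le> g n" "\<And>n. g n \<le> B" and fg: "\<And>n. f n \<le> g n"
  shows "E1 r p f \<le> E1 r p g"
  by (rule has_sum_mono[OF E1_has_sum[OF r f] E1_has_sum[OF r g]])
    (rule mult_left_mono[OF fg nb_nonneg[OF r p0 p1]])

lemma E1_dom:
  assumes r: "r \<ge> 0" and rr: "r \<le> r'" and f: "\<And>n. 0 \<le> f n" "\<And>n. f n \<le> B"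
    and fm: "\<And>n m. n \<le> m \<Longrightarrow> f n \<le> f m"
  shows "E1 r p f \<le> E1 r' p f"
proof -
  have r': "r' \<ge> 0" using r rr by simp
  define S where "S = {n. nb_pmf r p n \<le> nb_pmf r' p n}"
  have up: "Suc n \<in> S" if "n \<in> S" for n
  proof -
    have "nb_pmf r p n * ((real n + r)/(real n + 1)) * (1-p) \<le> nb_pmf r' p n * ((real n + r')/(real n + 1)) * (1-p)"
      using that p1 r rr nb_nonneg[OF r p0 p1, of n]
      by (intro mult_right_mono mult_mono divide_right_mono) (auto simp: S_def)
    then show ?thesis by (simp add: S_def nb_rec[OF r] nb_rec[OF r'])
  qed
  have ne: "\<exists>n. n \<in> S"
  proof (rule ccontr)
    assume "\<not> (\<exists>n. n \<in> S)"
    then have lt: "nb_pmf r' p n < nb_pmf r p n" for n by (auto simp: S_def not_le)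
    have "(1::real) < 1"
      by (rule has_sum_strict_mono[OF nb_has_sum[OF r' p0 p1] nb_has_sum[OF r p0 p1], of 0])
         (use lt less_imp_le in auto)
    then show False by simp
  qed
  define n0 where "n0 = (LEAST n. n \<in> S)"
  have n0S: "n0 \<in> S" unfolding n0_def using ne by (metis LeastI)
  have geS: "n \<in> S" if "n0 \<le> n" for n
    using that
  proof (induction n rule: dec_induct)
    case base then show ?case by (rule n0S)
  next
    case (step m) then show ?case using up by blast
  qed
  have ltS: "n \<notin> S" if "n < n0" for n
    using that not_less_Least n0_def by blast
  define C where "C = f n0"
  have key: "nb_pmf r p n * f n + nb_pmf r' p n * C \<le> nb_pmf r' p n * f n + nb_pmf r p n * C" for n
  proof (cases "n0 \<le> n")
    case True
    then have "nb_pmf r p n \<le> nb_pmf r' p n" "C \<le> f n" using geS fm by (auto simp: S_def C_def)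
    then have "0 \<le> (nb_pmf r' p n - nb_pmf r p n) * (f n - C)" by simp
    then show ?thesis by (simp add: algebra_simps)
  next
    case False
    then have "nb_pmf r' p n \<le> nb_pmf r p n" "f n \<le> C" using ltS[of n] fm[of n n0] False by (auto simp: S_def C_def not_le)
    then have "0 \<le> (nb_pmf r' p n - nb_pmf r p n) * (f n - C)"
      by (simp add: mult_nonpos_nonpos)
    then show ?thesis by (simp add: algebra_simps)
  qed
  have "E1 r p f + C \<le> E1 r' p f + C"
    by (rule has_sum_mono[OF has_sum_add[OF E1_has_sum[OF r f] E1_has_sum_const[OF r', of C]]
          has_sum_add[OF E1_has_sum[OF r' f] E1_has_sum_const[OF r, of C]] key])
  then show ?thesis by simp
qed


lemma E2_eq:
  assumes r: "r \<ge> 0" and s: "s \<ge> 0" and g: "\<And>z j. 0 \<le> g z j" "\<And>z j. g z j \<le> B"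
  shows "(\<Sum>\<^sub>\<infinity>(z, j)\<in>UNIV. nb_pmf r p z * nb_pmf s p j * g z j) = E1 r p (\<lambda>z. E1 s p (g z))"
proof -
  define F where "F = (\<lambda>(z,j). nb_pmf r p z * nb_pmf s p j * g z j)"
  define G where "G = (\<lambda>(z::nat,j::nat). nb_pmf r p z * (nb_pmf s p j * B))"
  have B: "0 \<le> B" using g(1)[of 0 0] g(2)[of 0 0] by linarith
  have Gs: "G summable_on Sigma UNIV (\<lambda>_. UNIV)"
  proof (rule summable_on_SigmaI)
    show "((\<lambda>j. G (z, j)) has_sum nb_pmf r p z * B) UNIV" for z
      unfolding G_def using has_sum_cmult_right[OF E1_has_sum_const[OF s, of B], of "nb_pmf r p z"]
      by simp
    show "(\<lambda>z. nb_pmf r p z * B) summable_on UNIV"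
      using E1_has_sum_const[OF r, of B] by (auto simp: summable_on_def)
    show "0 \<le> G (z, j)" for z j
      unfolding G_def using nb_nonneg[OF r p0 p1] nb_nonneg[OF s p0 p1] B by simp
  qed
  have Fs: "F summable_on Sigma UNIV (\<lambda>_. UNIV)"
  proof (rule summable_on_comparison_test[OF Gs])
    fix x :: "nat \<times> nat"
    obtain z j where x: "x = (z, j)" by fastforce
    have a: "0 \<le> nb_pmf r p z" "0 \<le> nb_pmf s p j" using nb_nonneg[OF r p0 p1] nb_nonneg[OF s p0 p1] by auto
    show "F x \<le> G x" unfolding x F_def G_def using a g
      by (simp add: mult.assoc mult_left_mono)
    show "0 \<le> F x" unfolding x F_def using a g by simp
  qed
  have "infsum F (Sigma UNIV (\<lambda>_. UNIV)) = infsum (\<lambda>z. infsum (\<lambda>j. F (z,j)) UNIV) UNIV"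
    using infsum_Sigma_banach[OF Fs] by simp
  also have "\<dots> = E1 r p (\<lambda>z. E1 s p (g z))"
    unfolding E1_def F_def by (simp add: mult.assoc infsum_cmult_right')
  finally show ?thesis unfolding F_def by simp
qed

lemma E2_bounds:
  assumes r: "r \<ge> 0" and s: "s \<ge> 0" and g: "\<And>z j. 0 \<le> g z j" "\<And>z j. g z j \<le> B"
  shows "0 \<le> E1 r p (\<lambda>z. E1 s p (g z))" "E1 r p (\<lambda>z. E1 s p (g z)) \<le> B"
proof -
  have h: "0 \<le> E1 s p (g z)" "E1 s p (g z) \<le> B" for z
    using E1_nonneg[OF s g(1)] E1_le[OF s g] by auto
  show "0 \<le> E1 r p (\<lambda>z. E1 s p (g z))" by (rule E1_nonneg[OF r h(1)])
  show "E1 r p (\<lambda>z. E1 s p (g z)) \<le> B" by (rule E1_le[OF r h])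
qed

lemma E2_mono:
  assumes r: "r \<ge> 0" and s: "s \<ge> 0" and g: "\<And>z j. 0 \<le> g z j" "\<And>z j. g z j \<le> B"
    and g': "\<And>z j. 0 \<le> g' z j" "\<And>z j. g' z j \<le> B" and gg: "\<And>z j. g z j \<le> g' z j"
  shows "E1 r p (\<lambda>z. E1 s p (g z)) \<le> E1 r p (\<lambda>z. E1 s p (g' z))"
proof -
  have h: "0 \<le> E1 s p (g z)" "E1 s p (g z) \<le> B" for z
    using E1_nonneg[OF s g(1)] E1_le[OF s g] by auto
  have h': "0 \<le> E1 s p (g' z)" "E1 s p (g' z) \<le> B" for z
    using E1_nonneg[OF s g'(1)] E1_le[OF s g'] by auto
  show ?thesis
    by (rule E1_mono[OF r h h']) (rule E1_mono[OF s g g' gg])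
qed

lemma E2_dom:
  assumes r: "r \<ge> 0" and s: "s \<ge> 0" and rr: "r \<le> r'" and ss: "s \<le> s'"
    and g: "\<And>z j. 0 \<le> g z j" "\<And>z j. g z j \<le> B"
    and gz: "\<And>z z' j. z \<le> z' \<Longrightarrow> g z j \<le> g z' j"
    and gj: "\<And>z j j'. j \<le> j' \<Longrightarrow> g z j \<le> g z j'"
  shows "E1 r p (\<lambda>z. E1 s p (g z)) \<le> E1 r' p (\<lambda>z. E1 s' p (g z))"
proof -
  have s': "s' \<ge> 0" using s ss by simp
  have h: "0 \<le> E1 s p (g z)" "E1 s p (g z) \<le> B" for z
    using E1_nonneg[OF s g(1)] E1_le[OF s g] by auto
  have h': "0 \<le> E1 s' p (g z)" "E1 s' p (g z) \<le> B" for z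
    using E1_nonneg[OF s' g(1)] E1_le[OF s' g] by auto
  have "E1 r p (\<lambda>z. E1 s p (g z)) \<le> E1 r p (\<lambda>z. E1 s' p (g z))"
    by (rule E1_mono[OF r h h']) (rule E1_dom[OF s ss g gj])
  also have "\<dots> \<le> E1 r' p (\<lambda>z. E1 s' p (g z))"
    by (rule E1_dom[OF r rr h']) (rule E1_mono[OF s' g g gz])
  finally show ?thesis .
qed

end


lemma p_t_bounds: "\<beta>0 > 0 \<Longrightarrow> 0 < p_t N \<beta>0 t \<and> p_t N \<beta>0 t < 1"
proof -
  assume b: "\<beta>0 > 0"
  have d: "0 < \<beta>0 + real N * real t" using b by (simp add: add_pos_nonneg)
  then show ?thesis unfolding p_t_def by simp
qed

declare Vrem.simps(2)[simp del]

lemma main: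
  fixes N T :: nat and \<alpha>0 \<beta>0 cp cu :: real and \<xi> :: nat
  assumes N: "N \<ge> 1" and a0: "\<alpha>0 > 0" and b0: "\<beta>0 > 0" and cp: "0 < cp" "cp < cu"
  shows "(\<forall>x k. 0 \<le> Vrem N T \<alpha>0 \<beta>0 \<xi> cp cu m x k \<and> Vrem N T \<alpha>0 \<beta>0 \<xi> cp cu m x k \<le> real (Suc m) * cu)
    \<and> (\<forall>k x x'. x \<le> x' \<longrightarrow> Vrem N T \<alpha>0 \<beta>0 \<xi> cp cu m x k \<le> Vrem N T \<alpha>0 \<beta>0 \<xi> cp cu m x' k)
    \<and> (\<forall>x k k'. k \<le> k' \<longrightarrow> Vrem N T \<alpha>0 \<beta>0 \<xi> cp cu m x k \<le> Vrem N T \<alpha>0 \<beta>0 \<xi> cp cu m x k')"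
proof (induction m)
  case 0
  show ?case using cp by (auto simp: ind_def)
next
  case (Suc m)
  let ?V = "Vrem N T \<alpha>0 \<beta>0 \<xi> cp cu"
  define B where "B = real (Suc m) * cu"
  have bnd: "0 \<le> ?V m x k" "?V m x k \<le> B" for x k using Suc.IH by (auto simp: B_def)
  have mx: "x \<le> x' \<Longrightarrow> ?V m x k \<le> ?V m x' k" for x x' k using Suc.IH by blast
  have mk: "k \<le> k' \<Longrightarrow> ?V m x k \<le> ?V m x k'" for x k k' using Suc.IH by blast
  define p where "p = p_t N \<beta>0 (T - Suc m)"
  have p0: "0 < p" and p1: "p < 1" using p_t_bounds[OF b0] by (auto simp: p_def)
  define rr where "rr = (\<lambda>k::nat. \<alpha>0 + real k)"
  define ss where "ss = (\<lambda>k::nat. (real N - 1) * (\<alpha>0 + real k))"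
  have rr0: "rr k \<ge> 0" for k using a0 by (simp add: rr_def)
  have ss0: "ss k \<ge> 0" for k using a0 N by (simp add: ss_def)
  have rrm: "k \<le> k' \<Longrightarrow> rr k \<le> rr k'" for k k' by (simp add: rr_def)
  have ssm: "k \<le> k' \<Longrightarrow> ss k \<le> ss k'" for k k' using N by (simp add: ss_def mult_left_mono)
  define EE where "EE = (\<lambda>k y. E1 (rr k) p (\<lambda>z. E1 (ss k) p (\<lambda>j. ?V m (y + z) (k + z + j))))"
  have EEb: "0 \<le> EE k y" "EE k y \<le> B" for k y
    unfolding EE_def using E2_bounds[OF p0 p1 rr0 ss0, of "\<lambda>z j. ?V m (y + z) (k + z + j)" B] bnd
    by auto
  have EEx: "y \<le> y' \<Longrightarrow> EE k y \<le> EE k y'" for k y y'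
    unfolding EE_def by (rule E2_mono[OF p0 p1 rr0 ss0]) (auto intro: bnd mx)
  have EEk: "EE k y \<le> EE k' y" if "k \<le> k'" for k k' y
  proof -
    have "EE k y \<le> E1 (rr k) p (\<lambda>z. E1 (ss k) p (\<lambda>j. ?V m (y + z) (k' + z + j)))"
      unfolding EE_def by (rule E2_mono[OF p0 p1 rr0 ss0]) (auto intro: bnd mk simp: that)
    also have "\<dots> \<le> EE k' y"
      unfolding EE_def
    proof (rule E2_dom[OF p0 p1 rr0 ss0 rrm[OF that] ssm[OF that]])
      show "0 \<le> ?V m (y + z) (k' + z + j)" "?V m (y + z) (k' + z + j) \<le> B" for z j by (rule bnd)+
      show "?V m (y + z) (k' + z + j) \<le> ?V m (y + z') (k' + z' + j)" if "z \<le> z'" for z z' j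
        using mx[of "y+z" "y+z'" "k' + z + j"] mk[of "k' + z + j" "k' + z' + j" "y+z'"] that by simp
      show "?V m (y + z) (k' + z + j) \<le> ?V m (y + z) (k' + z + j')" if "j \<le> j'" for z j j'
        using mk that by simp
    qed
    finally show ?thesis .
  qed
  have VS: "?V (Suc m) x k = Min ((\<lambda>a. cost \<xi> cp cu x a + EE k (x * (1 - a))) ` acts \<xi> x)" for x k
  proof -
    have "(\<Sum>\<^sub>\<infinity>(z, j)\<in>UNIV. nb_pmf (rr k) p z * nb_pmf (ss k) p j * ?V m (x * (1 - a) + z) (k + z + j))
        = EE k (x * (1 - a))" for a
      unfolding EE_def by (rule E2_eq[OF p0 p1 rr0 ss0]) (rule bnd)+
    then show ?thesis by (simp add: Vrem.simps(2) Let_def p_def rr_def ss_def)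
  qed
  have Vlo: "?V (Suc m) x k = min (EE k x) (cp + EE k 0)" if "x < \<xi>" for x k
    using that by (subst VS) (simp add: acts_def cost_def ind_def)
  have Vhi: "?V (Suc m) x k = cu + EE k 0" if "\<not> x < \<xi>" for x k
    using that by (subst VS) (simp add: acts_def cost_def ind_def)
  show ?case
  proof (intro conjI allI impI)
    fix x k
    show "0 \<le> ?V (Suc m) x k" using EEb[of k] cp
      by (cases "x < \<xi>") (auto simp: Vlo Vhi)
    have "EE k x \<le> B" "EE k 0 \<le> B" by (rule EEb)+
    then show "?V (Suc m) x k \<le> real (Suc (Suc m)) * cu" using cp
      by (cases "x < \<xi>") (auto simp: Vlo Vhi B_def algebra_simps min_le_iff_disj)
  next
    fix k x x' :: nat assume xx: "x \<le> x'"
    show "?V (Suc m) x k \<le> ?V (Suc m) x' k"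
    proof (cases "x' < \<xi>")
      case True
      then show ?thesis using xx EEx[OF xx, of k] by (simp add: Vlo)
    next
      case False
      then show ?thesis using cp by (cases "x < \<xi>") (auto simp: Vlo Vhi)
    qed
  next
    fix x k k' :: nat assume kk: "k \<le> k'"
    show "?V (Suc m) x k \<le> ?V (Suc m) x k'"
      using EEk[OF kk, of x] EEk[OF kk, of 0]
      by (cases "x < \<xi>") (auto simp: Vlo Vhi)
  qed
qed


theorem proposition1:
  fixes N T :: nat and \<alpha>0 \<beta>0 :: real and \<xi> :: "nat \<Rightarrow> nat" and cp cu :: "nat \<Rightarrow> real"
  assumes "N \<ge> 1" and "T \<ge> 1" and "\<alpha>0 > 0" and "\<beta>0 > 0"
    and "\<forall>i\<in>{1..N}. \<xi> i \<ge> 1 \<and> 0 < cp i \<and> cp i < cu i"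
    and "i \<in> {1..N}" and "t \<le> T"
  shows "(\<forall>k x x'. x \<le> x' \<longrightarrow>
            Vtil N T \<alpha>0 \<beta>0 (\<xi> i) (cp i) (cu i) t x k \<le> Vtil N T \<alpha>0 \<beta>0 (\<xi> i) (cp i) (cu i) t x' k)
       \<and> (\<forall>x k k'. k \<le> k' \<longrightarrow>
            Vtil N T \<alpha>0 \<beta>0 (\<xi> i) (cp i) (cu i) t x k \<le> Vtil N T \<alpha>0 \<beta>0 (\<xi> i) (cp i) (cu i) t x k')"
proof -
  have c: "0 < cp i" "cp i < cu i" using assms(5,6) by auto
  note M = main[OF assms(1,3,4) c, of T "\<xi> i" "T - t"]
  show ?thesis unfolding Vtil_def using M by blast
qed

end
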